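(* The function $\epsilon_s:[1,\infty)\to\mathbb{R}$ is positive and strictly decreasing, satisfies $\epsilon(\lambda)^2\le\epsilon_s(\lambda)$ for all $\lambda\ge1$, and $\epsilon_s(1)=1$. If moreover $\hat w=\sup_xw(x)<\infty$, then $\epsilon_s(\lambda)\le\hat w/\lfloor\lambda\rfloor$ for all $\lambda\ge1$.
   Context: Let $\pi,q$ be probability densities with respect to a $\sigma$-finite measure $\mu$ on $\mathbb{X}$ with $q>0$ wherever $\pi>0$; $\pi(dx)=\pi(x)\mu(dx)$, $q(dx)=q(x)\mu(dx)$, $\mathbb{S}=\{\pi>0\}$, $w=\pi/q$ on $\mathbb{S}$ and $0$ elsewhere. For integer $N\ge1$, $\epsilon(N)=\int_{\mathbb{S}}\int_{\mathbb{X}^{N-1}}\frac{w(z_1)}{\sum_{i=1}^Nw(z_i)}\prod_{n=2}^Nq(dz_n)\pi(dz_1)$; for $\lambda\ge1$ with $\beta(\lambda)=\lfloor\lambda\rfloor+1-\lambda$, $\epsilon(\lambda)=\beta(\lambda)\epsilon(\lfloor\lambda\rfloor)+(1-\beta(\lambda))\epsilon(\lfloor\lambda\rfloor+1)$, and $\epsilon_s(\lambda)=\int_{\mathbb{S}\times\mathbb{X}^{\lfloor\lambda\rfloor}}\Big(\frac{\beta(\lambda)w(z_1)}{\sum_{i=1}^{\lfloor\lambda\rfloor}w(z_i)}+\frac{(1-\beta(\lambda))w(z_1)}{\sum_{j=1}^{\lfloor\lambda\rfloor+1}w(z_j)}\Big)^2\prod_{n=2}^{\lfloor\lambda\rfloor+1}q(dz_n)\,\pi(dz_1)$.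 *)

theory Defs
  imports "HOL-Analysis.Analysis"
begin

text \<open>Setting: M is the sigma-finite base measure mu on X = space M, p is the density of pi,
 q the density of the proposal, both with respect to M.\<close>

definition supp :: "('a \<Rightarrow> real) \<Rightarrow> 'a set" where
  "supp p = {x. p x > 0}"

definition wt :: "('a \<Rightarrow> real) \<Rightarrow> ('a \<Rightarrow> real) \<Rightarrow> 'a \<Rightarrow> real" where
  "wt p q x = (if p x > 0 then p x / q x else 0)"

definition prodM :: "'a measure \<Rightarrow> ('a \<Rightarrow> real) \<Rightarrow> ('a \<Rightarrow> real) \<Rightarrow> nat \<Rightarrow> (nat \<Rightarrow> 'a) measure" where
  "prodM M p q N = PiM {1..N} (\<lambda>i. if i = 1 then density M (\<lambda>x. ennreal (p x))
                                           else density M (\<lambda>x. ennreal (q x)))"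

definition epsN :: "'a measure \<Rightarrow> ('a \<Rightarrow> real) \<Rightarrow> ('a \<Rightarrow> real) \<Rightarrow> nat \<Rightarrow> real" where
  "epsN M p q N = (\<integral>z. indicator (supp p) (z 1) *
       (wt p q (z 1) / (\<Sum>i\<in>{1..N}. wt p q (z i))) \<partial>prodM M p q N)"

definition betaL :: "real \<Rightarrow> real" where
  "betaL l = real_of_int \<lfloor>l\<rfloor> + 1 - l"

definition epsL :: "'a measure \<Rightarrow> ('a \<Rightarrow> real) \<Rightarrow> ('a \<Rightarrow> real) \<Rightarrow> real \<Rightarrow> real" where
  "epsL M p q l = betaL l * epsN M p q (nat \<lfloor>l\<rfloor>) + (1 - betaL l) * epsN M p q (nat \<lfloor>l\<rfloor> + 1)"

definition epsS :: "'a measure \<Rightarrow> ('a \<Rightarrow> real) \<Rightarrow> ('a \<Rightarrow> real) \<Rightarrow> real \<Rightarrow> real" where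
  "epsS M p q l = (let n = nat \<lfloor>l\<rfloor>; b = betaL l in
     \<integral>z. indicator (supp p) (z 1) *
       (b * wt p q (z 1) / (\<Sum>i\<in>{1..n}. wt p q (z i))
        + (1 - b) * wt p q (z 1) / (\<Sum>j\<in>{1..n+1}. wt p q (z j)))\<^sup>2 \<partial>prodM M p q (n + 1))"

end

theory Submission
  imports Defs "HOL-Probability.Probability"
begin

lemma (in prob_space) sq_le:
  fixes X :: "'a \<Rightarrow> real"
  assumes "integrable M X" "integrable M (\<lambda>x. (X x)\<^sup>2)"
  shows "(expectation X)\<^sup>2 \<le> expectation (\<lambda>x. (X x)\<^sup>2)"
proof -
  have "0 \<le> variance X" by (rule Bochner_Integration.integral_nonneg) simp
  then show ?thesis using variance_eq[OF assms] by simp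
qed

locale L8 =
  fixes M :: "'a measure" and p q :: "'a \<Rightarrow> real"
  assumes sf: "sigma_finite_measure M"
    and pm[measurable]: "p \<in> borel_measurable M" and qm[measurable]: "q \<in> borel_measurable M"
    and p0: "\<And>x. x \<in> space M \<Longrightarrow> p x \<ge> 0" and q0: "\<And>x. x \<in> space M \<Longrightarrow> q x \<ge> 0"
    and pint: "(\<integral>\<^sup>+x. ennreal (p x) \<partial>M) = 1" and qint: "(\<integral>\<^sup>+x. ennreal (q x) \<partial>M) = 1"
    and pq: "\<And>x. x \<in> space M \<Longrightarrow> p x > 0 \<Longrightarrow> q x > 0"
begin

abbreviation "w \<equiv> wt p q"

definition Mi :: "nat \<Rightarrow> 'a measure" where
  "Mi i = (if i = 1 then density M (\<lambda>x. ennreal (p x)) else density M (\<lambda>x. ennreal (q x)))"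

lemma prodM_eq: "prodM M p q N = PiM {1..N} Mi"
  unfolding prodM_def Mi_def by simp

lemma wm[measurable]: "w \<in> borel_measurable M"
  unfolding wt_def by measurable

lemma w_nonneg: "x \<in> space M \<Longrightarrow> 0 \<le> w x"
  unfolding wt_def using p0 q0 by auto

lemma w_pos_iff: "x \<in> space M \<Longrightarrow> (0 < w x) = (x \<in> supp p)"
  unfolding wt_def supp_def using pq by auto

lemma pqw: "x \<in> space M \<Longrightarrow> p x = q x * w x"
proof (cases "p x > 0")
  case False
  assume "x \<in> space M"
  then have "p x = 0" using p0[of x] False by linarith
  then show ?thesis by (simp add: wt_def)
next
  case True
  assume "x \<in> space M"
  then have "q x > 0" using pq True by blast
  then show ?thesis using True by (simp add: wt_def)
qed

lemma sets_Mi[simp, measurable_cong]: "sets (Mi i) = sets M"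
  unfolding Mi_def by simp

lemma space_Mi[simp]: "space (Mi i) = space M"
  unfolding Mi_def by simp

lemma prob_dens:
  assumes "f \<in> borel_measurable M" "(\<integral>\<^sup>+x. ennreal (f x) \<partial>M) = 1"
  shows "prob_space (density M (\<lambda>x. ennreal (f x)))"
proof
  show "emeasure (density M (\<lambda>x. ennreal (f x))) (space (density M (\<lambda>x. ennreal (f x)))) = 1"
    using assms by (simp add: emeasure_density)
qed

lemma prob_Mi: "prob_space (Mi i)"
  unfolding Mi_def using prob_dens[OF pm pint] prob_dens[OF qm qint] by simp

interpretation PP: product_prob_space Mi UNIV
  by (intro product_prob_space.intro product_sigma_finite.intro product_prob_space_axioms.intro)
     (auto intro: prob_space_imp_sigma_finite prob_Mi)

lemma prob_PiM: "prob_space (PiM I Mi)"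
  by (rule prob_space_PiM) (rule prob_Mi)

lemma comp_meas:
  assumes "f \<in> borel_measurable M"
  shows "(\<lambda>z. f (z i)) \<in> borel_measurable (PiM I Mi)"
proof (cases "i \<in> I")
  case True
  have f: "f \<in> borel_measurable (Mi i)"
    using assms by (simp add: measurable_cong_sets[OF sets_Mi refl])
  show ?thesis by (rule measurable_compose[OF measurable_component_singleton[where M=Mi, OF True] f])
next
  case False
  have "z \<in> space (PiM I Mi) \<Longrightarrow> f (z i) = f undefined" for z
    using PiE_arb[of z I _ i] False unfolding space_PiM by simp
  then have "(\<lambda>z. f (z i)) \<in> borel_measurable (PiM I Mi) \<longleftrightarrow> (\<lambda>z. f undefined) \<in> borel_measurable (PiM I Mi)"
    by (rule measurable_cong)
  then show ?thesis by simp
qed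

lemma pred_supp[measurable]: "Measurable.pred M (\<lambda>x. x \<in> supp p)"
  unfolding supp_def mem_Collect_eq by measurable

lemma ind_meas[measurable]: "indicator (supp p) \<in> borel_measurable M"
  by measurable

lemma wc_meas[measurable]: "(\<lambda>z. w (z i)) \<in> borel_measurable (PiM I Mi)"
  by (rule comp_meas[OF wm])

lemma ic_meas[measurable]: "(\<lambda>z. indicator (supp p) (z i) :: real) \<in> borel_measurable (PiM I Mi)"
  by (rule comp_meas[OF ind_meas])

definition Sw :: "nat \<Rightarrow> (nat \<Rightarrow> 'a) \<Rightarrow> real" where
  "Sw k z = (\<Sum>i\<in>{1..k}. w (z i))"

lemma Sw_meas[measurable]: "Sw k \<in> borel_measurable (PiM I Mi)"
  unfolding Sw_def by measurable

definition F :: "nat \<Rightarrow> real \<Rightarrow> (nat \<Rightarrow> 'a) \<Rightarrow> real" where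
  "F n b z = indicator (supp p) (z 1) *
       (b * w (z 1) / Sw n z + (1 - b) * w (z 1) / Sw (n+1) z)\<^sup>2"

definition E :: "nat \<Rightarrow> (nat \<Rightarrow> 'a) \<Rightarrow> real" where
  "E k z = indicator (supp p) (z 1) * (w (z 1) / Sw k z)"

lemma F_meas[measurable]: "F n b \<in> borel_measurable (PiM I Mi)"
  unfolding F_def by measurable

lemma E_meas[measurable]: "E k \<in> borel_measurable (PiM I Mi)"
  unfolding E_def by measurable

definition G :: "nat \<Rightarrow> real \<Rightarrow> real" where
  "G n b = integral\<^sup>L (PiM {1..n+1} Mi) (F n b)"

lemma epsS_G: "epsS M p q l = G (nat \<lfloor>l\<rfloor>) (betaL l)"
  unfolding epsS_def G_def F_def Sw_def prodM_eq Let_def by simp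

lemma epsN_E: "epsN M p q k = integral\<^sup>L (PiM {1..k} Mi) (E k)"
  unfolding epsN_def E_def Sw_def prodM_eq by simp

lemma space_PiM_in: "z \<in> space (PiM {1..m} Mi) \<Longrightarrow> i \<in> {1..m} \<Longrightarrow> z i \<in> space M"
  by (auto simp: space_PiM PiE_iff)

lemma Sw_restrict: "{1..k} \<subseteq> A \<Longrightarrow> Sw k (restrict z A) = Sw k z"
  unfolding Sw_def by (rule sum.cong) auto

lemma Sw_Suc: "Sw (k+1) z = Sw k z + w (z (k+1))"
  unfolding Sw_def by simp

lemma Sw_nonneg: "(\<And>i. i \<in> {1..k} \<Longrightarrow> z i \<in> space M) \<Longrightarrow> 0 \<le> Sw k z"
  unfolding Sw_def by (rule sum_nonneg) (simp add: w_nonneg)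

lemma Sw_ge: "1 \<le> k \<Longrightarrow> (\<And>i. i \<in> {1..k} \<Longrightarrow> z i \<in> space M) \<Longrightarrow> w (z 1) \<le> Sw k z"
  unfolding Sw_def by (rule member_le_sum) (auto simp: w_nonneg)

lemma ptw:
  assumes n: "1 \<le> n" and sp: "\<And>i. i \<in> {1..n+1} \<Longrightarrow> z i \<in> space M" and s: "z 1 \<in> supp p"
  shows "0 < w (z 1) / Sw (n+1) z" "w (z 1) / Sw (n+1) z \<le> w (z 1) / Sw n z"
    "w (z 1) / Sw n z \<le> 1" "w (z (n+1)) > 0 \<Longrightarrow> w (z 1) / Sw (n+1) z < w (z 1) / Sw n z"
proof -
  have z1: "z 1 \<in> space M" using sp n by auto
  have wp: "0 < w (z 1)" using w_pos_iff[OF z1] s by simp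
  have sp': "\<And>i. i \<in> {1..n} \<Longrightarrow> z i \<in> space M" using sp by auto
  have ge: "w (z 1) \<le> Sw n z" using Sw_ge[OF n sp'] .
  have wn: "0 \<le> w (z (n+1))" using sp[of "n+1"] w_nonneg by simp
  have S1: "Sw (n+1) z = Sw n z + w (z (n+1))" by (rule Sw_Suc)
  have pos: "0 < Sw n z" using ge wp by linarith
  show "0 < w (z 1) / Sw (n+1) z" using S1 pos wp wn by simp
  show "w (z 1) / Sw (n+1) z \<le> w (z 1) / Sw n z"
    using S1 pos wp wn by (intro divide_left_mono) auto
  show "w (z 1) / Sw n z \<le> 1" using ge pos by simp
  show "w (z (n+1)) > 0 \<Longrightarrow> w (z 1) / Sw (n+1) z < w (z 1) / Sw n z"
    using S1 pos wp by (intro divide_strict_left_mono) auto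
qed

lemma alg:
  fixes a c b1 b2 :: real
  assumes "0 < c" "c \<le> a" "a \<le> 1" "0 \<le> b1" "b1 \<le> b2" "b2 \<le> 1"
  shows "0 < b1*a+(1-b1)*c" "b1*a+(1-b1)*c \<le> b2*a+(1-b2)*c" "b2*a+(1-b2)*c \<le> a"
    "c < a \<Longrightarrow> b1 < b2 \<Longrightarrow> b1*a+(1-b1)*c < b2*a+(1-b2)*c"
proof -
  have e: "b2*a+(1-b2)*c - (b1*a+(1-b1)*c) = (b2-b1)*(a-c)" by (simp add: algebra_simps)
  have "0 \<le> b1*(a-c)" using assms by simp
  then show "0 < b1*a+(1-b1)*c" using assms by (simp add: algebra_simps)
  show "b1*a+(1-b1)*c \<le> b2*a+(1-b2)*c" using e assms
    by (metis diff_ge_0_iff_ge mult_nonneg_nonneg)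
  have "0 \<le> (1-b2)*(a-c)" using assms by simp
  then show "b2*a+(1-b2)*c \<le> a" by (simp add: algebra_simps)
  show "c < a \<Longrightarrow> b1 < b2 \<Longrightarrow> b1*a+(1-b1)*c < b2*a+(1-b2)*c" using e
    by (metis diff_gt_0_iff_gt mult_pos_pos)
qed

lemma F_alt: "F n b z = indicator (supp p) (z 1) *
       (b * (w (z 1) / Sw n z) + (1 - b) * (w (z 1) / Sw (n+1) z))\<^sup>2"
  unfolding F_def by simp

lemma F_props:
  assumes n: "1 \<le> n" and sp: "\<And>i. i \<in> {1..n+1} \<Longrightarrow> z i \<in> space M"
    and b: "0 \<le> ba" "ba \<le> bb" "bb \<le> 1"
  shows "0 \<le> F n ba z" "F n ba z \<le> F n bb z" "F n bb z \<le> 1"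
    "z 1 \<in> supp p \<Longrightarrow> 0 < F n ba z"
    "z 1 \<in> supp p \<Longrightarrow> w (z (n+1)) > 0 \<Longrightarrow> ba < bb \<Longrightarrow> F n ba z < F n bb z"
    "F n 1 z \<le> E n z"
proof -
  define a where "a = w (z 1) / Sw n z"
  define c where "c = w (z 1) / Sw (n+1) z"
  have Fe: "F n b z = indicator (supp p) (z 1) * (b * a + (1 - b) * c)\<^sup>2" for b
    unfolding F_alt a_def c_def ..
  have Ee: "E n z = indicator (supp p) (z 1) * a" unfolding E_def a_def ..
  have Pc: "0 < c \<and> c \<le> a \<and> a \<le> 1 \<and> (w (z (n+1)) > 0 \<longrightarrow> c < a)" if "z 1 \<in> supp p"
  proof -
    have sp': "i \<in> {1..n+1} \<Longrightarrow> z i \<in> space M" for i using sp by blast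
    show ?thesis unfolding a_def c_def
      using ptw[where n=n and z=z, OF n sp' that] by blast
  qed
  show "0 \<le> F n ba z" unfolding F_def by simp
  show "F n ba z \<le> F n bb z"
  proof (cases "z 1 \<in> supp p")
    case True
    then have "0 < c" "c \<le> a" "a \<le> 1" using Pc by auto
    note A = alg[OF this b]
    show ?thesis unfolding Fe using True A(1,2) by (simp add: power_mono)
  qed (simp add: F_def)
  show "F n bb z \<le> 1"
  proof (cases "z 1 \<in> supp p")
    case True
    then have P: "0 < c" "c \<le> a" "a \<le> 1" using Pc by auto
    note A = alg[OF P b]
    have "(bb * a + (1 - bb) * c)\<^sup>2 \<le> 1"
      using A P by (intro power_le_one) linarith+
    then show ?thesis unfolding Fe using True by simp
  qed (simp add: F_def)
  show "z 1 \<in> supp p \<Longrightarrow> 0 < F n ba z"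
  proof -
    assume True: "z 1 \<in> supp p"
    then have P: "0 < c" "c \<le> a" "a \<le> 1" using Pc by auto
    note A = alg[OF P b]
    show ?thesis unfolding Fe using True A(1) by simp
  qed
  show "z 1 \<in> supp p \<Longrightarrow> w (z (n+1)) > 0 \<Longrightarrow> ba < bb \<Longrightarrow> F n ba z < F n bb z"
  proof -
    assume True: "z 1 \<in> supp p" and h: "w (z (n+1)) > 0" "ba < bb"
    then have P: "0 < c" "c \<le> a" "a \<le> 1" and lt: "c < a" using Pc by auto
    note A = alg[OF P b]
    have "(ba * a + (1 - ba) * c)\<^sup>2 < (bb * a + (1 - bb) * c)\<^sup>2"
      using A(1) A(4)[OF lt h(2)] by (intro power_strict_mono) auto
    then show ?thesis unfolding Fe using True by simp
  qed
  show "F n 1 z \<le> E n z"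
  proof (cases "z 1 \<in> supp p")
    case True
    then have P: "0 < c" "c \<le> a" "a \<le> 1" using Pc by auto
    have "a\<^sup>2 \<le> a"
      using P by (simp add: power2_eq_square mult_right_le_one_le)
    then show ?thesis unfolding Fe Ee using True by simp
  qed (simp add: F_def E_def)
qed

lemma E_bnd:
  assumes k: "1 \<le> k" and sp: "\<And>i. i \<in> {1..k} \<Longrightarrow> z i \<in> space M"
  shows "0 \<le> E k z" "E k z \<le> 1"
proof -
  have z1: "z 1 \<in> space M" using sp k by auto
  have ge: "w (z 1) \<le> Sw k z" by (rule Sw_ge[OF k sp])
  have wn: "0 \<le> w (z 1)" by (rule w_nonneg[OF z1])
  show "0 \<le> E k z" unfolding E_def using ge wn by simp
  show "E k z \<le> 1"
  proof (cases "w (z 1) = 0")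
    case True then show ?thesis by (simp add: E_def)
  next
    case False
    then have "0 < Sw k z" using ge wn by linarith
    then have "w (z 1) / Sw k z \<le> 1" using ge by simp
    then show ?thesis unfolding E_def by (simp add: indicator_def)
  qed
qed

lemma integrable_E:
  assumes "1 \<le> k" "k \<le> m"
  shows "integrable (PiM {1..m} Mi) (E k)"
proof -
  interpret P: prob_space "PiM {1..m} Mi" by (rule prob_PiM)
  show ?thesis
  proof (rule P.integrable_const_bound[where B=1])
    show "AE z in PiM {1..m} Mi. norm (E k z) \<le> 1"
    proof (rule AE_I2)
      fix z assume z: "z \<in> space (PiM {1..m} Mi)"
      have "\<And>i. i \<in> {1..k} \<Longrightarrow> z i \<in> space M" using space_PiM_in[OF z] assms by auto
      then show "norm (E k z) \<le> 1" using E_bnd[OF assms(1)] by (simp add: abs_le_iff)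
    qed
  qed measurable
qed

lemma integrable_F:
  assumes "1 \<le> n" "n + 1 \<le> m" "0 \<le> b" "b \<le> 1"
  shows "integrable (PiM {1..m} Mi) (F n b)"
proof -
  interpret P: prob_space "PiM {1..m} Mi" by (rule prob_PiM)
  show ?thesis
  proof (rule P.integrable_const_bound[where B=1])
    show "AE z in PiM {1..m} Mi. norm (F n b z) \<le> 1"
    proof (rule AE_I2)
      fix z assume z: "z \<in> space (PiM {1..m} Mi)"
      have sp: "\<And>i. i \<in> {1..n+1} \<Longrightarrow> z i \<in> space M" using space_PiM_in[OF z] assms by auto
      have "0 \<le> F n b z" "F n b z \<le> 1" using F_props[where n=n and z=z, OF assms(1) sp assms(3) order_refl assms(4)] by auto
      then show "norm (F n b z) \<le> 1" by simp
    qed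
  qed measurable
qed

lemma marg:
  fixes g h :: "(nat \<Rightarrow> 'a) \<Rightarrow> real"
  assumes km: "k \<le> m" and g: "g \<in> borel_measurable (PiM {1..k} Mi)"
    and h: "\<And>z. z \<in> space (PiM {1..m} Mi) \<Longrightarrow> h z = g (restrict z {1..k})"
  shows "integral\<^sup>L (PiM {1..m} Mi) h = integral\<^sup>L (PiM {1..k} Mi) g"
proof -
  have sub: "{1..k} \<subseteq> {1..m}" using km by auto
  have d: "PiM {1..k} Mi = distr (PiM {1..m} Mi) (PiM {1..k} Mi) (\<lambda>f. restrict f {1..k})"
    using PP.distr_restrict[of "{1..k}" "{1..m}"] km by simp
  have "integral\<^sup>L (PiM {1..k} Mi) g = integral\<^sup>L (distr (PiM {1..m} Mi) (PiM {1..k} Mi) (\<lambda>f. restrict f {1..k})) g"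
    using d by simp
  also have "\<dots> = (\<integral>z. g (restrict z {1..k}) \<partial>PiM {1..m} Mi)"
    by (rule integral_distr[OF measurable_restrict_subset[where M=Mi, OF sub] g])
  also have "\<dots> = integral\<^sup>L (PiM {1..m} Mi) h"
    by (rule Bochner_Integration.integral_cong) (simp_all add: h)
  finally show ?thesis by simp
qed

lemma supp_sets[measurable]: "supp p \<inter> space M \<in> sets M"
proof -
  have "supp p \<inter> space M = {x \<in> space M. 0 < p x}" by (auto simp: supp_def)
  also have "\<dots> \<in> sets M" by measurable
  finally show ?thesis .
qed

lemma AE_supp:
  assumes "1 \<in> I" shows "AE z in PiM I Mi. z 1 \<in> supp p"
proof (rule AE_PiM_component[OF prob_Mi assms])
  have e: "Mi 1 = density M (\<lambda>x. ennreal (p x))" by (simp add: Mi_def)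
  have "AE x in M. 0 < ennreal (p x) \<longrightarrow> x \<in> supp p" by (rule AE_I2) (simp add: supp_def)
  then show "AE x in Mi 1. x \<in> supp p"
    unfolding e by (subst AE_density) auto
qed

lemma G_pos:
  assumes n: "1 \<le> n" and b: "0 \<le> b" "b \<le> 1"
  shows "0 < G n b"
proof -
  interpret P: prob_space "PiM {1..n+1} Mi" by (rule prob_PiM)
  have int: "integrable (PiM {1..n+1} Mi) (F n b)" by (rule integrable_F) (use assms in auto)
  have nn: "AE z in PiM {1..n+1} Mi. 0 \<le> F n b z"
    by (rule AE_I2) (simp add: F_def)
  have ae1: "AE z in PiM {1..n+1} Mi. z 1 \<in> supp p" by (rule AE_supp) simp
  have pos: "AE z in PiM {1..n+1} Mi. 0 < F n b z"
    using ae1 AE_space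
  proof eventually_elim
    case (elim z)
    have sp: "\<And>i. i \<in> {1..n+1} \<Longrightarrow> z i \<in> space M" using space_PiM_in[OF elim(2)] by auto
    show ?case using F_props(4)[where n=n and z=z, OF n sp b(1) order_refl b(2) elim(1)] .
  qed
  have "G n b \<noteq> 0"
  proof
    assume "G n b = 0"
    then have "AE z in PiM {1..n+1} Mi. F n b z = 0"
      using integral_nonneg_eq_0_iff_AE[OF int nn] unfolding G_def by simp
    with pos have "AE z in PiM {1..n+1} Mi. False" by eventually_elim simp
    then have "ae_filter (PiM {1..n+1} Mi) = bot" using trivial_limit_def by blast
    then have "emeasure (PiM {1..n+1} Mi) (space (PiM {1..n+1} Mi)) = 0"
      by (simp only: ae_filter_eq_bot_iff)
    then show False using P.emeasure_space_1 by simp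
  qed
  moreover have "0 \<le> G n b" unfolding G_def by (rule integral_nonneg_AE[OF nn])
  ultimately show ?thesis by simp
qed

lemma G_mono:
  assumes n: "1 \<le> n" and b: "0 \<le> b1" "b1 \<le> b2" "b2 \<le> 1"
  shows "G n b1 \<le> G n b2"
  unfolding G_def
proof (rule integral_mono)
  show "integrable (PiM {1..n+1} Mi) (F n b1)" by (rule integrable_F) (use assms in auto)
  show "integrable (PiM {1..n+1} Mi) (F n b2)" by (rule integrable_F) (use assms in auto)
  fix z assume z: "z \<in> space (PiM {1..n+1} Mi)"
  have sp: "\<And>i. i \<in> {1..n+1} \<Longrightarrow> z i \<in> space M" using space_PiM_in[OF z] by auto
  show "F n b1 z \<le> F n b2 z" using F_props(2)[where n=n and z=z, OF n sp b] .
qed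

lemma pint_supp: "(\<integral>\<^sup>+x. ennreal (p x) * indicator (supp p \<inter> space M) x \<partial>M) = 1"
proof -
  have "(\<integral>\<^sup>+x. ennreal (p x) * indicator (supp p \<inter> space M) x \<partial>M) = (\<integral>\<^sup>+x. ennreal (p x) \<partial>M)"
  proof (rule nn_integral_cong)
    fix x assume x: "x \<in> space M"
    show "ennreal (p x) * indicator (supp p \<inter> space M) x = ennreal (p x)"
    proof (cases "x \<in> supp p")
      case False
      then have "p x \<le> 0" by (simp add: supp_def)
      then show ?thesis using False by (simp add: ennreal_neg)
    qed (use x in simp)
  qed
  then show ?thesis using pint by simp
qed

lemma qint_supp: "(\<integral>\<^sup>+x. ennreal (q x) * indicator (supp p \<inter> space M) x \<partial>M) \<noteq> 0"
proof
  assume "(\<integral>\<^sup>+x. ennreal (q x) * indicator (supp p \<inter> space M) x \<partial>M) = 0"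
  then have "AE x in M. ennreal (q x) * indicator (supp p \<inter> space M) x = 0"
    by (subst (asm) nn_integral_0_iff_AE) measurable
  then have "AE x in M. ennreal (p x) * indicator (supp p \<inter> space M) x = 0"
    using AE_space
  proof eventually_elim
    case (elim x)
    show ?case
    proof (cases "x \<in> supp p")
      case True
      then have "q x > 0" using pq[OF elim(2)] by (simp add: supp_def)
      then show ?thesis using elim True by simp
    qed simp
  qed
  then have "(\<integral>\<^sup>+x. ennreal (p x) * indicator (supp p \<inter> space M) x \<partial>M) = (\<integral>\<^sup>+x. 0 \<partial>M)"
    by (rule nn_integral_cong_AE)
  then show False using pint_supp by simp
qed

lemma Mi_supp: "emeasure (Mi i) (supp p \<inter> space M) \<noteq> 0"
  using pint_supp qint_supp by (simp add: Mi_def emeasure_density)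

lemma Mi_space: "emeasure (Mi i) (space M) = 1"
  using prob_space.emeasure_space_1[OF prob_Mi[of i]] by simp

lemma G_strict:
  assumes n: "1 \<le> n" and b: "0 \<le> b1" "b1 < b2" "b2 \<le> 1"
  shows "G n b1 < G n b2"
proof -
  interpret P: prob_space "PiM {1..n+1} Mi" by (rule prob_PiM)
  define A where "A = PiE {1..n+1} (\<lambda>i. if i = 1 \<or> i = n+1 then supp p \<inter> space M else space M)"
  have As: "A \<in> sets (PiM {1..n+1} Mi)" unfolding A_def
    by (rule sets_PiM_I_finite) auto
  have "emeasure (PiM {1..n+1} Mi) A = (\<Prod>i\<in>{1..n+1}. emeasure (Mi i) (if i = 1 \<or> i = n+1 then supp p \<inter> space M else space M))"
    unfolding A_def by (rule PP.emeasure_PiM) auto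
  also have "\<dots> \<noteq> 0" using Mi_supp Mi_space by auto
  finally have A0: "emeasure (PiM {1..n+1} Mi) A \<noteq> 0" .
  show ?thesis unfolding G_def
  proof (rule P.integral_less_AE[OF _ _ A0 As])
    show "integrable (PiM {1..n+1} Mi) (F n b1)" by (rule integrable_F) (use assms in auto)
    show "integrable (PiM {1..n+1} Mi) (F n b2)" by (rule integrable_F) (use assms in auto)
    show "AE z in PiM {1..n+1} Mi. F n b1 z \<le> F n b2 z"
    proof (rule AE_I2)
      fix z assume z: "z \<in> space (PiM {1..n+1} Mi)"
      have sp: "\<And>i. i \<in> {1..n+1} \<Longrightarrow> z i \<in> space M" using space_PiM_in[OF z] by auto
      show "F n b1 z \<le> F n b2 z" using F_props(2)[where n=n and z=z, OF n sp b(1) less_imp_le[OF b(2)] b(3)] .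
    qed
    show "AE z in PiM {1..n+1} Mi. z \<in> A \<longrightarrow> F n b1 z \<noteq> F n b2 z"
    proof (rule AE_I2, rule impI)
      fix z assume z: "z \<in> space (PiM {1..n+1} Mi)" and zA: "z \<in> A"
      have sp: "\<And>i. i \<in> {1..n+1} \<Longrightarrow> z i \<in> space M" using space_PiM_in[OF z] by auto
      have all: "\<forall>i\<in>{1..n+1}. z i \<in> (if i = 1 \<or> i = n+1 then supp p \<inter> space M else space M)"
        using zA unfolding A_def PiE_iff by blast
      have z1: "z 1 \<in> supp p" using all[rule_format, of 1] n by simp
      have zn: "z (n+1) \<in> supp p \<inter> space M" using all[rule_format, of "n+1"] n by simp
      then have wn: "0 < w (z (n+1))" using w_pos_iff by auto
      show "F n b1 z \<noteq> F n b2 z"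
        using F_props(5)[where n=n and z=z, OF n sp b(1) less_imp_le[OF b(2)] b(3) z1 wn b(2)] by simp
    qed
  qed
qed

lemma F_restrict: "k + 1 \<le> m \<Longrightarrow> F k b (restrict z {1..m}) = F k b z"
  unfolding F_def by (simp add: Sw_restrict)

lemma E_restrict: "1 \<le> k \<Longrightarrow> k \<le> m \<Longrightarrow> E k (restrict z {1..m}) = E k z"
  unfolding E_def by (simp add: Sw_restrict)

lemma G_shift:
  assumes n: "1 \<le> n" shows "G n 0 = G (n+1) 1"
  unfolding G_def
proof (rule marg[symmetric])
  fix z
  show "F (n + 1) 1 z = F n 0 (restrict z {1..n+1})"
    unfolding F_restrict[OF order_refl] by (simp add: F_def)
qed auto

lemma epsN_marg:
  assumes n: "1 \<le> n" shows "epsN M p q n = integral\<^sup>L (PiM {1..n+1} Mi) (E n)"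
  unfolding epsN_E
proof (rule marg[symmetric])
  fix z show "E n z = E n (restrict z {1..n})" using E_restrict[OF n order_refl] by simp
qed auto

lemma jensen:
  assumes n: "1 \<le> n" and b: "0 \<le> b" "b \<le> 1"
  shows "(b * epsN M p q n + (1-b) * epsN M p q (n+1))\<^sup>2 \<le> G n b"
proof -
  interpret P: prob_space "PiM {1..n+1} Mi" by (rule prob_PiM)
  define H where "H z = b * E n z + (1-b) * E (n+1) z" for z
  have iE1: "integrable (PiM {1..n+1} Mi) (E n)" by (rule integrable_E) (use n in auto)
  have iE2: "integrable (PiM {1..n+1} Mi) (E (n+1))" by (rule integrable_E) (use n in auto)
  have iH: "integrable (PiM {1..n+1} Mi) H" unfolding H_def using iE1 iE2 by simp
  have intH: "integral\<^sup>L (PiM {1..n+1} Mi) H = b * epsN M p q n + (1-b) * epsN M p q (n+1)"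
  proof -
    have e2: "epsN M p q (n+1) = integral\<^sup>L (PiM {1..n+1} Mi) (E (n+1))" by (simp add: epsN_E)
    show ?thesis unfolding H_def using iE1 iE2 epsN_marg[OF n] e2 by simp
  qed
  have FH: "F n b z = (H z)\<^sup>2" for z
  proof (cases "z 1 \<in> supp p")
    case True then show ?thesis unfolding F_alt H_def E_def by simp
  qed (simp add: F_def H_def E_def)
  have iF: "integrable (PiM {1..n+1} Mi) (F n b)" by (rule integrable_F) (use assms in auto)
  have iH2: "integrable (PiM {1..n+1} Mi) (\<lambda>z. (H z)\<^sup>2)" using iF unfolding FH .
  have "(integral\<^sup>L (PiM {1..n+1} Mi) H)\<^sup>2 \<le> integral\<^sup>L (PiM {1..n+1} Mi) (\<lambda>z. (H z)\<^sup>2)"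
    by (rule P.sq_le[OF iH iH2])
  also have "\<dots> = G n b" unfolding G_def FH ..
  finally show ?thesis unfolding intH .
qed

lemma G_le_epsN:
  assumes n: "1 \<le> n" shows "G n 1 \<le> epsN M p q n"
  unfolding epsN_marg[OF n] G_def
proof (rule integral_mono)
  show "integrable (PiM {1..n+1} Mi) (F n 1)" by (rule integrable_F) (use assms in auto)
  show "integrable (PiM {1..n+1} Mi) (E n)" by (rule integrable_E) (use n in auto)
  fix z assume z: "z \<in> space (PiM {1..n+1} Mi)"
  have sp: "\<And>i. i \<in> {1..n+1} \<Longrightarrow> z i \<in> space M" using space_PiM_in[OF z] by auto
  show "F n 1 z \<le> E n z" using F_props(6)[where n=n and z=z and ba=1 and bb=1, OF n sp] by simp
qed

lemma G_one: "G 1 1 = 1"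
proof -
  interpret P: prob_space "PiM {1..1+1} Mi" by (rule prob_PiM)
  have ae1: "AE z in PiM {1..1+1} Mi. z 1 \<in> supp p" by (rule AE_supp) simp
  have ae: "AE z in PiM {1..1+1} Mi. F 1 1 z = 1"
    using ae1 AE_space
  proof eventually_elim
    case (elim z)
    have z1: "z 1 \<in> space M" using space_PiM_in[OF elim(2), of 1] by simp
    have "0 < w (z 1)" using w_pos_iff[OF z1] elim(1) by simp
    then show ?case using elim(1) by (simp add: F_def Sw_def)
  qed
  have "G 1 1 = integral\<^sup>L (PiM {1..1+1} Mi) (\<lambda>_. 1)"
    unfolding G_def by (rule Bochner_Integration.integral_cong_AE[OF _ _ ae]) simp_all
  also have "\<dots> = 1" using P.prob_space by simp
  finally show ?thesis .
qed

abbreviation "N0 \<equiv> density M (\<lambda>x. ennreal (q x))"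

lemma prob_N0: "prob_space N0"
  by (rule prob_dens[OF qm qint])

interpretation QQ: product_prob_space "\<lambda>_::nat. N0" UNIV
  by (intro product_prob_space.intro product_sigma_finite.intro product_prob_space_axioms.intro)
     (auto intro: prob_space_imp_sigma_finite prob_N0)

lemma sets_Q: "sets (PiM I (\<lambda>_. N0)) = sets (PiM I Mi)"
  by (rule sets_PiM_cong) auto

lemma space_Q: "space (PiM I (\<lambda>_. N0)) = space (PiM I Mi)"
  by (rule sets_eq_imp_space_eq[OF sets_Q])

lemma meas_Q: "f \<in> borel_measurable (PiM I Mi) \<Longrightarrow> f \<in> borel_measurable (PiM I (\<lambda>_. N0))"
  using measurable_cong_sets[OF sets_Q refl, of I] by simp

lemma PiM_dens:
  assumes k: "1 \<le> k"
  shows "PiM {1..k} Mi = density (PiM {1..k} (\<lambda>_. N0)) (\<lambda>z. ennreal (w (z 1)))"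
proof (rule sym, rule PP.PiM_eqI)
  show "finite {1..k}" by simp
  show "sets (density (PiM {1..k} (\<lambda>_. N0)) (\<lambda>z. ennreal (w (z 1)))) = sets (PiM {1..k} Mi)"
    using sets_Q by simp
  fix A assume A: "\<And>i. i \<in> {1..k} \<Longrightarrow> A i \<in> sets (Mi i)"
  let ?Q = "PiM {1..k} (\<lambda>_. N0)"
  have AM: "\<And>i. i \<in> {1..k} \<Longrightarrow> A i \<in> sets M" using A by simp
  have PA: "PiE {1..k} A \<in> sets ?Q" by (rule sets_PiM_I_finite) (use AM in auto)
  have gm: "(\<lambda>z. ennreal (w (z 1))) \<in> borel_measurable ?Q"
    by (rule meas_Q) measurable
  define f where "f i x = (if i = 1 then ennreal (w x) else 1) * (indicator (A i) x :: ennreal)" for i x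
  have "emeasure (density ?Q (\<lambda>z. ennreal (w (z 1)))) (PiE {1..k} A)
      = (\<integral>\<^sup>+z. ennreal (w (z 1)) * indicator (PiE {1..k} A) z \<partial>?Q)"
    by (rule emeasure_density[OF gm PA])
  also have "\<dots> = (\<integral>\<^sup>+z. (\<Prod>i\<in>{1..k}. f i (z i)) \<partial>?Q)"
  proof (rule nn_integral_cong)
    fix z assume z: "z \<in> space ?Q"
    have ext: "z \<in> extensional {1..k}" using z by (simp add: space_PiM PiE_def)
    have "(\<Prod>i\<in>{1..k}. f i (z i)) = (\<Prod>i\<in>{1..k}. (if i = 1 then ennreal (w (z i)) else 1)) * (\<Prod>i\<in>{1..k}. (indicator (A i) (z i) :: ennreal))"
      unfolding f_def by (rule prod.distrib)
    also have "(\<Prod>i\<in>{1..k}. (if i = 1 then ennreal (w (z i)) else 1)) = ennreal (w (z 1))"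
      using k by simp
    also have "(\<Prod>i\<in>{1..k}. (indicator (A i) (z i) :: ennreal)) = indicator (PiE {1..k} A) z"
    proof (cases "z \<in> PiE {1..k} A")
      case True
      then have "\<forall>i\<in>{1..k}. z i \<in> A i" by (auto simp: PiE_iff)
      then have "(\<Prod>i\<in>{1..k}. (indicator (A i) (z i) :: ennreal)) = 1"
        by (intro prod.neutral) simp
      then show ?thesis using True by simp
    next
      case False
      then obtain i where i: "i \<in> {1..k}" "z i \<notin> A i" using ext by (auto simp: PiE_iff)
      then have "(\<Prod>i\<in>{1..k}. (indicator (A i) (z i) :: ennreal)) = 0"
        by (intro prod_zero) (use i in \<open>auto intro!: bexI[of _ i]\<close>)
      then show ?thesis using False by simp
    qed
    finally show "ennreal (w (z 1)) * indicator (PiE {1..k} A) z = (\<Prod>i\<in>{1..k}. f i (z i))" by simp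
  qed
  also have "\<dots> = (\<Prod>i\<in>{1..k}. integral\<^sup>N N0 (f i))"
  proof (rule QQ.product_nn_integral_prod)
    fix i assume i: "i \<in> {1..k}"
    have [measurable]: "A i \<in> sets M" using AM[OF i] .
    have "f i \<in> borel_measurable M" unfolding f_def by measurable
    then show "f i \<in> borel_measurable N0" by simp
  qed simp
  also have "\<dots> = (\<Prod>i\<in>{1..k}. emeasure (Mi i) (A i))"
  proof (rule prod.cong[OF refl])
    fix i assume i: "i \<in> {1..k}"
    have [measurable]: "A i \<in> sets M" using AM[OF i] .
    show "integral\<^sup>N N0 (f i) = emeasure (Mi i) (A i)"
    proof (cases "i = 1")
      case True
      have fm: "f i \<in> borel_measurable M" unfolding f_def by measurable
      have "integral\<^sup>N N0 (f i) = (\<integral>\<^sup>+x. ennreal (q x) * f i x \<partial>M)"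
        by (rule nn_integral_density[OF _ fm]) measurable
      also have "\<dots> = (\<integral>\<^sup>+x. ennreal (q x) * (ennreal (w x) * indicator (A i) x) \<partial>M)"
        unfolding f_def using True by simp
      also have "\<dots> = (\<integral>\<^sup>+x. ennreal (p x) * indicator (A i) x \<partial>M)"
      proof (rule nn_integral_cong)
        fix x assume x: "x \<in> space M"
        have "ennreal (p x) = ennreal (q x) * ennreal (w x)"
          using pqw[OF x] q0[OF x] w_nonneg[OF x] by (simp add: ennreal_mult)
        then show "ennreal (q x) * (ennreal (w x) * indicator (A i) x) = ennreal (p x) * indicator (A i) x"
          by (simp add: mult.assoc)
      qed
      also have "\<dots> = emeasure (Mi i) (A i)"
      proof -
        have e: "Mi i = density M (\<lambda>x. ennreal (p x))" using True by (simp add: Mi_def)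
        have m: "(\<lambda>x. ennreal (p x)) \<in> borel_measurable M" by measurable
        show ?thesis unfolding e using emeasure_density[OF m AM[OF i]] by simp
      qed
      finally show ?thesis .
    next
      case False
      have fe: "f i = indicator (A i)" using False by (simp add: f_def fun_eq_iff)
      have As: "A i \<in> sets N0" by simp
      show ?thesis unfolding fe nn_integral_indicator[OF As] using False by (simp add: Mi_def)
    qed
  qed
  finally show "emeasure (density ?Q (\<lambda>z. ennreal (w (z 1)))) (PiE {1..k} A) = (\<Prod>i\<in>{1..k}. emeasure (Mi i) (A i))" .
qed

lemma epsN_Q:
  assumes k: "1 \<le> k"
  shows "epsN M p q k = (\<integral>z. (w (z 1))\<^sup>2 / Sw k z \<partial>PiM {1..k} (\<lambda>_. N0))"
proof -
  let ?Q = "PiM {1..k} (\<lambda>_. N0)"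
  have "epsN M p q k = integral\<^sup>L (density ?Q (\<lambda>z. ennreal (w (z 1)))) (E k)"
    unfolding epsN_E PiM_dens[OF k] ..
  also have "\<dots> = (\<integral>z. w (z 1) *\<^sub>R E k z \<partial>?Q)"
  proof (rule integral_density)
    show "E k \<in> borel_measurable ?Q" by (rule meas_Q) measurable
    show "(\<lambda>z. w (z 1)) \<in> borel_measurable ?Q" by (rule meas_Q) measurable
    show "AE z in ?Q. 0 \<le> w (z 1)"
    proof (rule AE_I2)
      fix z assume "z \<in> space ?Q"
      then have "z 1 \<in> space M" using space_PiM_in[of z k 1] k by (simp add: space_Q)
      then show "0 \<le> w (z 1)" by (rule w_nonneg)
    qed
  qed
  also have "\<dots> = (\<integral>z. (w (z 1))\<^sup>2 / Sw k z \<partial>?Q)"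
  proof (rule Bochner_Integration.integral_cong[OF refl])
    fix z assume "z \<in> space ?Q"
    then have z1: "z 1 \<in> space M" using space_PiM_in[of z k 1] k by (simp add: space_Q)
    show "w (z 1) *\<^sub>R E k z = (w (z 1))\<^sup>2 / Sw k z"
    proof (cases "z 1 \<in> supp p")
      case True then show ?thesis by (simp add: E_def power2_eq_square)
    next
      case False
      then have "w (z 1) = 0" using w_pos_iff[OF z1] w_nonneg[OF z1] by simp
      then show ?thesis by (simp add: E_def)
    qed
  qed
  finally show ?thesis .
qed

lemma symm:
  assumes i: "i \<in> {1..k}"
  shows "(\<integral>z. (w (z 1))\<^sup>2 / Sw k z \<partial>PiM {1..k} (\<lambda>_. N0)) = (\<integral>z. (w (z i))\<^sup>2 / Sw k z \<partial>PiM {1..k} (\<lambda>_. N0))"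
proof -
  let ?Q = "PiM {1..k} (\<lambda>_::nat. N0)"
  define t where "t j = (if j = 1 then i else if j = i then 1 else j)" for j :: nat
  have inv: "t (t j) = j" for j unfolding t_def by auto
  have maps: "t \<in> {1..k} \<rightarrow> {1..k}" using i unfolding t_def by auto
  have inj: "inj_on t {1..k}" by (metis inv inj_on_inverseI)
  define T where "T \<omega> = (\<lambda>n\<in>{1..k}. \<omega> (t n))" for \<omega> :: "nat \<Rightarrow> 'a"
  have d: "distr ?Q ?Q T = ?Q"
    using distr_PiM_reindex[of "{1..k}" "\<lambda>_. N0" t "{1..k}"] prob_N0 inj maps
    unfolding T_def by simp
  have Tm: "T \<in> measurable ?Q ?Q" unfolding T_def
  proof (rule measurable_restrict)
    fix n assume n: "n \<in> {1..k}"
    then have "t n \<in> {1..k}" using maps by auto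
    then show "(\<lambda>\<omega>. \<omega> (t n)) \<in> measurable ?Q N0" by (rule measurable_component_singleton)
  qed
  define h where "h z = (w (z 1))\<^sup>2 / Sw k z" for z
  have hm: "h \<in> borel_measurable ?Q" unfolding h_def by (rule meas_Q) measurable
  have "integral\<^sup>L ?Q h = integral\<^sup>L (distr ?Q ?Q T) h" using d by simp
  also have "\<dots> = (\<integral>z. h (T z) \<partial>?Q)" by (rule integral_distr[OF Tm hm])
  also have "\<dots> = (\<integral>z. (w (z i))\<^sup>2 / Sw k z \<partial>?Q)"
  proof (rule Bochner_Integration.integral_cong[OF refl])
    fix z
    have k1: "1 \<in> {1..k}" using i by auto
    have "Sw k (T z) = (\<Sum>n\<in>{1..k}. w (z (t n)))" unfolding Sw_def T_def by simp
    also have "\<dots> = Sw k z" unfolding Sw_def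
      by (rule sum.reindex_bij_witness[where i=t and j=t]) (use maps inv in auto)
    finally have "Sw k (T z) = Sw k z" .
    moreover have "T z 1 = z i" using k1 unfolding T_def t_def by simp
    ultimately show "h (T z) = (w (z i))\<^sup>2 / Sw k z" unfolding h_def by simp
  qed
  finally show ?thesis unfolding h_def .
qed

lemma epsN_bound:
  assumes k: "1 \<le> k" and bdd: "bdd_above (w ` space M)"
  shows "epsN M p q k \<le> (SUP x\<in>space M. w x) / real k"
proof -
  let ?W = "SUP x\<in>space M. w x"
  let ?Q = "PiM {1..k} (\<lambda>_::nat. N0)"
  interpret Qp: prob_space ?Q by (rule prob_space_PiM) (rule prob_N0)
  have ne: "space M \<noteq> {}"
  proof
    assume "space M = {}"
    then have "(\<integral>\<^sup>+x. ennreal (p x) \<partial>M) = (\<integral>\<^sup>+x. 0 \<partial>M)" by (intro nn_integral_cong) simp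
    then show False using pint by simp
  qed
  have wle: "x \<in> space M \<Longrightarrow> w x \<le> ?W" for x by (rule cSUP_upper[OF _ bdd])
  have W0: "0 \<le> ?W"
  proof -
    obtain x where "x \<in> space M" using ne by blast
    then show ?thesis using wle w_nonneg by (meson order_trans)
  qed
  define h where "h i z = (w (z i))\<^sup>2 / Sw k z" for i z
  have spQ: "z \<in> space ?Q \<Longrightarrow> j \<in> {1..k} \<Longrightarrow> z j \<in> space M" for z j
    using space_PiM_in[of z k j] by (simp add: space_Q)
  have hb: "0 \<le> h i z \<and> h i z \<le> w (z i)" if z: "z \<in> space ?Q" and i: "i \<in> {1..k}" for i z
  proof -
    have wi: "0 \<le> w (z i)" using w_nonneg spQ[OF z i] .
    have le: "w (z i) \<le> Sw k z" unfolding Sw_def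
      by (rule member_le_sum[OF i]) (use w_nonneg spQ[OF z] in auto)
    show ?thesis
    proof (cases "Sw k z = 0")
      case True then show ?thesis using wi by (simp add: h_def)
    next
      case False
      then have Sp: "0 < Sw k z" using le wi by linarith
      have "w (z i) / Sw k z \<le> 1" using le Sp by simp
      then have "w (z i) * (w (z i) / Sw k z) \<le> w (z i) * 1" using wi by (rule mult_left_mono)
      then show ?thesis using wi Sp by (simp add: h_def power2_eq_square)
    qed
  qed
  have hint: "integrable ?Q (h i)" if i: "i \<in> {1..k}" for i
  proof (rule Qp.integrable_const_bound[where B="?W"])
    show "AE z in ?Q. norm (h i z) \<le> ?W"
    proof (rule AE_I2)
      fix z assume z: "z \<in> space ?Q"
      show "norm (h i z) \<le> ?W" using hb[OF z i] wle[OF spQ[OF z i]] by simp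
    qed
    show "h i \<in> borel_measurable ?Q" unfolding h_def by (rule meas_Q) measurable
  qed
  have hfun: "h j = (\<lambda>z. (w (z j))\<^sup>2 / Sw k z)" for j by (simp add: h_def fun_eq_iff)
  have e1: "epsN M p q k = integral\<^sup>L ?Q (h 1)" unfolding epsN_Q[OF k] hfun ..
  have "real k * epsN M p q k = (\<Sum>i\<in>{1..k}. integral\<^sup>L ?Q (h i))"
  proof -
    have "(\<Sum>i\<in>{1..k}. integral\<^sup>L ?Q (h i)) = (\<Sum>i\<in>{1..k}. integral\<^sup>L ?Q (h 1))"
    proof (rule sum.cong[OF refl])
      fix i assume i: "i \<in> {1..k}"
      show "integral\<^sup>L ?Q (h i) = integral\<^sup>L ?Q (h 1)" unfolding hfun using symm[OF i] by simp
    qed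
    then show ?thesis using e1 by simp
  qed
  also have "\<dots> = (\<integral>z. (\<Sum>i\<in>{1..k}. h i z) \<partial>?Q)"
    by (rule Bochner_Integration.integral_sum[symmetric]) (rule hint)
  also have "\<dots> \<le> (\<integral>z. ?W \<partial>?Q)"
  proof (rule integral_mono)
    show "integrable ?Q (\<lambda>z. \<Sum>i\<in>{1..k}. h i z)" using hint by auto
    show "integrable ?Q (\<lambda>z. ?W)" by (rule Qp.integrable_const)
    fix z assume z: "z \<in> space ?Q"
    show "(\<Sum>i\<in>{1..k}. h i z) \<le> ?W"
    proof (cases "Sw k z = 0")
      case True then show ?thesis using W0 by (simp add: h_def)
    next
      case False
      have Sn: "0 \<le> Sw k z" unfolding Sw_def by (rule sum_nonneg) (use w_nonneg spQ[OF z] in auto)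
      with False have Sp: "0 < Sw k z" by simp
      have "(\<Sum>i\<in>{1..k}. h i z) = (\<Sum>i\<in>{1..k}. (w (z i))\<^sup>2) / Sw k z"
        unfolding h_def by (simp add: sum_divide_distrib)
      also have "\<dots> \<le> (\<Sum>i\<in>{1..k}. ?W * w (z i)) / Sw k z"
      proof (rule divide_right_mono[OF sum_mono])
        fix i assume i: "i \<in> {1..k}"
        show "(w (z i))\<^sup>2 \<le> ?W * w (z i)"
          unfolding power2_eq_square
          using wle[OF spQ[OF z i]] w_nonneg[OF spQ[OF z i]] by (rule mult_right_mono)
      qed (use Sn in simp)
      also have "\<dots> = ?W" using Sp unfolding Sw_def[symmetric] sum_distrib_left[symmetric]
        by (simp add: Sw_def)
      finally show ?thesis .
    qed
  qed
  also have "\<dots> = ?W" using Qp.prob_space by simp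
  finally have "real k * epsN M p q k \<le> ?W" .
  then show ?thesis using k by (simp add: pos_le_divide_eq mult.commute)
qed

lemma G_anti:
  assumes "1 \<le> m" "m \<le> m'" shows "G m' 1 \<le> G m 1"
  using assms(2)
proof (induction m' rule: dec_induct)
  case base then show ?case by simp
next
  case (step j)
  have j: "1 \<le> j" using assms(1) step(1) by simp
  have "G (Suc j) 1 = G j 0" using G_shift[OF j] by simp
  also have "\<dots> \<le> G j 1" by (rule G_mono[OF j]) auto
  finally show ?case using step(3) by simp
qed

lemma floor_facts:
  assumes l: "1 \<le> l"
  shows "1 \<le> nat \<lfloor>l\<rfloor>" "0 < betaL l" "betaL l \<le> 1" "real (nat \<lfloor>l\<rfloor>) = real_of_int \<lfloor>l\<rfloor>"
proof -
  have f1: "1 \<le> \<lfloor>l\<rfloor>" using l by simp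
  have "nat 1 \<le> nat \<lfloor>l\<rfloor>" by (rule nat_mono[OF f1])
  then show "1 \<le> nat \<lfloor>l\<rfloor>" by simp
  show "0 < betaL l" unfolding betaL_def using floor_correct[of l] by linarith
  show "betaL l \<le> 1" unfolding betaL_def using floor_correct[of l] by linarith
  show "real (nat \<lfloor>l\<rfloor>) = real_of_int \<lfloor>l\<rfloor>" using f1 by simp
qed

lemma main:
  shows "(\<forall>l\<ge>1. epsS M p q l > 0)
    \<and> (\<forall>l1 l2. 1 \<le> l1 \<and> l1 < l2 \<longrightarrow> epsS M p q l2 < epsS M p q l1)
    \<and> (\<forall>l\<ge>1. (epsL M p q l)\<^sup>2 \<le> epsS M p q l)
    \<and> epsS M p q 1 = 1
    \<and> (bdd_above (wt p q ` space M) \<longrightarrow>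
         (\<forall>l\<ge>1. epsS M p q l \<le> (SUP x\<in>space M. wt p q x) / real_of_int \<lfloor>l\<rfloor>))"
proof (intro conjI allI impI)
  fix l :: real assume l: "1 \<le> l"
  note ff = floor_facts[OF l]
  show "epsS M p q l > 0" unfolding epsS_G by (rule G_pos) (use ff in auto)
next
  fix l :: real assume l: "1 \<le> l"
  note ff = floor_facts[OF l]
  show "(epsL M p q l)\<^sup>2 \<le> epsS M p q l" unfolding epsS_G epsL_def
    by (rule jensen) (use ff in auto)
next
  show "epsS M p q 1 = 1" unfolding epsS_G using G_one by (simp add: betaL_def)
next
  fix l1 l2 :: real assume h: "1 \<le> l1 \<and> l1 < l2"
  then have l1: "1 \<le> l1" and l2: "1 \<le> l2" and lt: "l1 < l2" by auto
  note f1 = floor_facts[OF l1] and f2 = floor_facts[OF l2]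
  define n1 where "n1 = nat \<lfloor>l1\<rfloor>"
  define n2 where "n2 = nat \<lfloor>l2\<rfloor>"
  have fl: "\<lfloor>l1\<rfloor> \<le> \<lfloor>l2\<rfloor>" using lt by (intro floor_mono) simp
  then have nle: "n1 \<le> n2" unfolding n1_def n2_def by simp
  show "epsS M p q l2 < epsS M p q l1"
    unfolding epsS_G n1_def[symmetric] n2_def[symmetric]
  proof (cases "n1 = n2")
    case True
    then have "\<lfloor>l1\<rfloor> = \<lfloor>l2\<rfloor>" unfolding n1_def n2_def using f1(1) f2(1) by simp
    then have "betaL l2 < betaL l1" unfolding betaL_def using lt by simp
    then show "G n2 (betaL l2) < G n1 (betaL l1)" unfolding True
      by (intro G_strict) (use f1 f2 n2_def in auto)
  next
    case False
    then have lt2: "n1 + 1 \<le> n2" using nle by simp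
    have n1: "1 \<le> n1" using f1 n1_def by simp
    have "G n2 (betaL l2) \<le> G n2 1" by (rule G_mono) (use f2 n2_def in auto)
    also have "\<dots> \<le> G (n1+1) 1" by (rule G_anti[OF _ lt2]) simp
    also have "\<dots> = G n1 0" using G_shift[OF n1] by simp
    also have "\<dots> < G n1 (betaL l1)" by (rule G_strict[OF n1]) (use f1 in auto)
    finally show "G n2 (betaL l2) < G n1 (betaL l1)" .
  qed
next
  fix l :: real assume bdd: "bdd_above (wt p q ` space M)" and l: "1 \<le> l"
  note ff = floor_facts[OF l]
  have "epsS M p q l = G (nat \<lfloor>l\<rfloor>) (betaL l)" by (rule epsS_G)
  also have "\<dots> \<le> G (nat \<lfloor>l\<rfloor>) 1" by (rule G_mono) (use ff in auto)
  also have "\<dots> \<le> epsN M p q (nat \<lfloor>l\<rfloor>)" by (rule G_le_epsN) (use ff in auto)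
  also have "\<dots> \<le> (SUP x\<in>space M. wt p q x) / real (nat \<lfloor>l\<rfloor>)" by (rule epsN_bound[OF ff(1) bdd])
  finally show "epsS M p q l \<le> (SUP x\<in>space M. wt p q x) / real_of_int \<lfloor>l\<rfloor>" using ff(4) by simp
qed

end

theorem lemma8p2:
  fixes M :: "'a measure" and p q :: "'a \<Rightarrow> real"
  assumes "sigma_finite_measure M"
    and "p \<in> borel_measurable M" and "q \<in> borel_measurable M"
    and "\<And>x. x \<in> space M \<Longrightarrow> p x \<ge> 0" and "\<And>x. x \<in> space M \<Longrightarrow> q x \<ge> 0"
    and "(\<integral>\<^sup>+x. ennreal (p x) \<partial>M) = 1" and "(\<integral>\<^sup>+x. ennreal (q x) \<partial>M) = 1"
    and "\<And>x. x \<in> space M \<Longrightarrow> p x > 0 \<Longrightarrow> q x > 0"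
  shows "(\<forall>l\<ge>1. epsS M p q l > 0)
    \<and> (\<forall>l1 l2. 1 \<le> l1 \<and> l1 < l2 \<longrightarrow> epsS M p q l2 < epsS M p q l1)
    \<and> (\<forall>l\<ge>1. (epsL M p q l)\<^sup>2 \<le> epsS M p q l)
    \<and> epsS M p q 1 = 1
    \<and> (bdd_above (wt p q ` space M) \<longrightarrow>
         (\<forall>l\<ge>1. epsS M p q l \<le> (SUP x\<in>space M. wt p q x) / real_of_int \<lfloor>l\<rfloor>))"
proof -
  interpret L8 M p q by (rule L8.intro[OF assms])
  show ?thesis by (rule main)
qed

end
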